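(* Suppose a finite graph $G$ is a cluster of induced subgraphs $G_1,\ldots,G_k$. (i) If $G$ has cluster-girth at least $4$ then $\mathrm{Cl}(G)$ is isomorphic to a cluster of the complexes $\mathrm{Cl}(G_1),\ldots,\mathrm{Cl}(G_k)$ of the same shape as $G$. (ii) If $G$ has cluster-girth at least $5$ then $N[G]$ is homotopy equivalent to a cluster of the complexes $N[G_1],\ldots,N[G_k]$ of the same shape as $G$.
   Context: Graphs are simple, loopless and undirected. A finite graph (resp. simplicial complex) $X$ is a cluster of $X_1,\ldots,X_k$ (its parts) if $X_1,\ldots,X_k$ are induced subgraphs (resp. induced subcomplexes) of $X$ with $X=X_1\cup\cdots\cup X_k$ and such that for all $i\neq j$ the intersection $X_i\cap X_j$ is either empty or consists of a single vertex. The shape of the cluster is the hypergraph with vertex set $V(X)$ and hyperedges $\{V(X_i):i=1,\ldots,k\}$. The cluster-girth is the smallest $l\geq 3$ such that there exist pairwise distinct vertices $v_0,\ldots,v_{l-1}$ and pairwise distinct indices $i_0,\ldots,i_{l-1}$ with $v_j\in V(X_{i_{j-1}})\cap V(X_{i_j})$ for $j=0,\ldots,l-1$ (indices modulo $l$); it is infinite if no such cycle exists. For a graph $G$: $\mathrm{Cl}(G)$ is the clique complex (faces are vertex sets of complete subgraphs); $N_G[v]=\{v\}\cup\{w: vw\in E(G)\}$ is the closed neighbourhood; the closed neighbourhood complex $N[G]$ is the simplicial complex on $V(G)$ whose faces are all sets $\sigma$ with $\sigma\subseteq N_G[v]$ for some $v\in V(G)$. *)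

theory Defs
  imports "HOL-Analysis.Analysis" "HOL-Library.Extended_Nat"
begin

definition simple_graph :: "'a set \<Rightarrow> 'a set set \<Rightarrow> bool" where
  "simple_graph V E \<longleftrightarrow> finite V \<and> (\<forall>e\<in>E. \<exists>u v. u \<noteq> v \<and> u \<in> V \<and> v \<in> V \<and> e = {u, v})"

definition induced_edges :: "'a set set \<Rightarrow> 'a set \<Rightarrow> 'a set set" where
  "induced_edges E W = {e \<in> E. e \<subseteq> W}"

text \<open>G = (V,E) is a cluster of the induced subgraphs G_i = G[Vs i], i < k.\<close>
definition graph_cluster :: "'a set \<Rightarrow> 'a set set \<Rightarrow> nat \<Rightarrow> (nat \<Rightarrow> 'a set) \<Rightarrow> bool" where
  "graph_cluster V E k Vs \<longleftrightarrow>
     (\<forall>i<k. Vs i \<subseteq> V) \<and>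
     V = (\<Union>i<k. Vs i) \<and>
     E = (\<Union>i<k. induced_edges E (Vs i)) \<and>
     (\<forall>i<k. \<forall>j<k. i \<noteq> j \<longrightarrow> card (Vs i \<inter> Vs j) \<le> 1)"

text \<open>Shape of a cluster: the hypergraph (vertex set, set of vertex sets of parts).\<close>
definition shape :: "'a set \<Rightarrow> nat \<Rightarrow> (nat \<Rightarrow> 'a set) \<Rightarrow> 'a set \<times> 'a set set" where
  "shape V k Vs = (V, Vs ` {..<k})"

definition has_cluster_cycle :: "nat \<Rightarrow> (nat \<Rightarrow> 'a set) \<Rightarrow> nat \<Rightarrow> bool" where
  "has_cluster_cycle k Vs l \<longleftrightarrow>
     (\<exists>(v :: nat \<Rightarrow> 'a) (ix :: nat \<Rightarrow> nat).
        inj_on v {..<l} \<and> inj_on ix {..<l} \<and> (\<forall>j<l. ix j < k) \<and>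
        (\<forall>j<l. v j \<in> Vs (ix ((j + l - 1) mod l)) \<inter> Vs (ix j)))"

text \<open>Cluster-girth: least l \<ge> 3 admitting a cluster cycle; infinite if none.\<close>
definition cluster_girth :: "nat \<Rightarrow> (nat \<Rightarrow> 'a set) \<Rightarrow> enat" where
  "cluster_girth k Vs = (INF l \<in> {l. 3 \<le> l \<and> has_cluster_cycle k Vs l}. enat l)"

definition simplicial_complex :: "'a set set \<Rightarrow> bool" where
  "simplicial_complex K \<longleftrightarrow> finite K \<and> (\<forall>\<sigma>\<in>K. finite \<sigma> \<and> \<sigma> \<noteq> {}) \<and>
     (\<forall>\<sigma>\<in>K. \<forall>\<tau>. \<tau> \<subseteq> \<sigma> \<and> \<tau> \<noteq> {} \<longrightarrow> \<tau> \<in> K)"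

definition cverts :: "'a set set \<Rightarrow> 'a set" where
  "cverts K = \<Union>K"

definition induced_subcomplex :: "'a set set \<Rightarrow> 'a set set \<Rightarrow> bool" where
  "induced_subcomplex L K \<longleftrightarrow> L \<subseteq> K \<and> (\<forall>\<sigma>\<in>K. \<sigma> \<subseteq> cverts L \<longrightarrow> \<sigma> \<in> L)"

definition complex_cluster :: "'a set set \<Rightarrow> nat \<Rightarrow> (nat \<Rightarrow> 'a set set) \<Rightarrow> bool" where
  "complex_cluster X k Xs \<longleftrightarrow>
     simplicial_complex X \<and>
     (\<forall>i<k. simplicial_complex (Xs i) \<and> induced_subcomplex (Xs i) X) \<and>
     X = (\<Union>i<k. Xs i) \<and>
     (\<forall>i<k. \<forall>j<k. i \<noteq> j \<longrightarrow> card (cverts (Xs i) \<inter> cverts (Xs j)) \<le> 1)"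

definition complex_iso :: "'a set set \<Rightarrow> 'b set set \<Rightarrow> bool" where
  "complex_iso K L \<longleftrightarrow> (\<exists>f. bij_betw f (cverts K) (cverts L) \<and>
      (\<forall>\<sigma>. \<sigma> \<subseteq> cverts K \<longrightarrow> (\<sigma> \<in> K \<longleftrightarrow> f ` \<sigma> \<in> L)))"

text \<open>Geometric realization of a finite complex K, as a subspace of R^(cverts K)
  (product topology): convex combinations of vertices supported on a face.\<close>
definition realization :: "'a set set \<Rightarrow> ('a \<Rightarrow> real) topology" where
  "realization K = subtopology (powertop_real (cverts K))
     {f. f \<in> extensional (cverts K) \<and> (\<forall>v\<in>cverts K. 0 \<le> f v) \<and>
         sum f (cverts K) = 1 \<and> {v \<in> cverts K. f v \<noteq> 0} \<in> K}"

definition clique_complex :: "'a set \<Rightarrow> 'a set set \<Rightarrow> 'a set set" where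
  "clique_complex V E = {\<sigma>. \<sigma> \<noteq> {} \<and> \<sigma> \<subseteq> V \<and> finite \<sigma> \<and>
      (\<forall>u\<in>\<sigma>. \<forall>v\<in>\<sigma>. u \<noteq> v \<longrightarrow> {u, v} \<in> E)}"

definition closed_nbhd :: "'a set \<Rightarrow> 'a set set \<Rightarrow> 'a \<Rightarrow> 'a set" where
  "closed_nbhd V E v = insert v {w \<in> V. {v, w} \<in> E}"

definition nbhd_complex :: "'a set \<Rightarrow> 'a set set \<Rightarrow> 'a set set" where
  "nbhd_complex V E = {\<sigma>. \<sigma> \<noteq> {} \<and> (\<exists>v\<in>V. \<sigma> \<subseteq> closed_nbhd V E v)}"

end

theory Submission imports Defs begin

lemma girth_no:
  assumes "enat m \<le> cluster_girth k Vs" "3 \<le> l" "l < m"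
  shows "\<not> has_cluster_cycle k Vs l"
proof
  assume "has_cluster_cycle k Vs l"
  then have "cluster_girth k Vs \<le> enat l" unfolding cluster_girth_def
    using assms(2) by (intro INF_lower) auto
  with assms(1) have "enat m \<le> enat l" by (rule order_trans)
  with assms(3) show False by simp
qed

lemma four_enat: "(4::enat) = enat 4" and five_enat: "(5::enat) = enat 5"
  by (simp_all add: numeral_eq_enat)

lemma all3: "(\<forall>j<(3::nat). P j) \<longleftrightarrow> P 0 \<and> P 1 \<and> P 2"
  by (auto simp: eval_nat_numeral less_Suc_eq)
lemma all4: "(\<forall>j<(4::nat). P j) \<longleftrightarrow> P 0 \<and> P 1 \<and> P 2 \<and> P 3"
  by (auto simp: eval_nat_numeral less_Suc_eq)

lemma cyc3:
  assumes "distinct [x,y,z]" "distinct [P,Q,R]" "P < k" "Q < k" "R < k"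
    "x \<in> Vs R" "x \<in> Vs P" "y \<in> Vs P" "y \<in> Vs Q" "z \<in> Vs Q" "z \<in> Vs R"
  shows "has_cluster_cycle k Vs 3"
  unfolding has_cluster_cycle_def
proof (intro exI conjI)
  show "inj_on ((!) [x,y,z]) {..<3}" using assms(1) by (intro inj_on_nth) auto
  show "inj_on ((!) [P,Q,R]) {..<3}" using assms(2) by (intro inj_on_nth) auto
  show "\<forall>j<3. [P,Q,R] ! j < k" unfolding all3 using assms by simp
  show "\<forall>j<3. [x,y,z] ! j \<in> Vs ([P,Q,R] ! ((j + 3 - 1) mod 3)) \<inter> Vs ([P,Q,R] ! j)"
    unfolding all3 using assms by simp
qed

lemma cyc4:
  assumes "distinct [x,y,z,u]" "distinct [P,Q,R,S]" "P < k" "Q < k" "R < k" "S < k"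
    "x \<in> Vs S" "x \<in> Vs P" "y \<in> Vs P" "y \<in> Vs Q" "z \<in> Vs Q" "z \<in> Vs R" "u \<in> Vs R" "u \<in> Vs S"
  shows "has_cluster_cycle k Vs 4"
  unfolding has_cluster_cycle_def
proof (intro exI conjI)
  show "inj_on ((!) [x,y,z,u]) {..<4}" using assms(1) by (intro inj_on_nth) auto
  show "inj_on ((!) [P,Q,R,S]) {..<4}" using assms(2) by (intro inj_on_nth) auto
  show "\<forall>j<4. [P,Q,R,S] ! j < k" unfolding all4 using assms by simp
  show "\<forall>j<4. [x,y,z,u] ! j \<in> Vs ([P,Q,R,S] ! ((j + 4 - 1) mod 4)) \<inter> Vs ([P,Q,R,S] ! j)"
    unfolding all4 using assms by simp
qed

locale clus =
  fixes V :: "'a set" and E :: "'a set set" and k :: nat and Vs :: "nat \<Rightarrow> 'a set"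
  assumes sg: "simple_graph V E" and gc: "graph_cluster V E k Vs"
begin

lemma finV: "finite V"
  using sg by (simp add: simple_graph_def)

lemma Vs_sub: "i < k \<Longrightarrow> Vs i \<subseteq> V"
  using gc unfolding graph_cluster_def by blast

lemma cover: "v \<in> V \<Longrightarrow> \<exists>i<k. v \<in> Vs i"
  using gc by (auto simp: graph_cluster_def)

lemma edge_part: "e \<in> E \<Longrightarrow> \<exists>i<k. e \<subseteq> Vs i"
proof -
  assume "e \<in> E"
  moreover have "E = (\<Union>i<k. induced_edges E (Vs i))" using gc by (simp add: graph_cluster_def)
  ultimately show ?thesis by (auto simp: induced_edges_def)
qed

lemma edge_ne: "{a,b} \<in> E \<Longrightarrow> a \<noteq> b \<and> a \<in> V \<and> b \<in> V"
proof -
  assume "{a,b} \<in> E"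
  then obtain u v where "u \<noteq> v" "u \<in> V" "v \<in> V" "{a,b} = {u,v}"
    using sg unfolding simple_graph_def by blast
  then show ?thesis by (metis doubleton_eq_iff)
qed

lemma pair:
  assumes "i < k" "j < k" "a \<noteq> b" "a \<in> Vs i" "b \<in> Vs i" "a \<in> Vs j" "b \<in> Vs j"
  shows "i = j"
proof (rule ccontr)
  assume "i \<noteq> j"
  then have "card (Vs i \<inter> Vs j) \<le> 1" using gc assms(1,2) by (simp add: graph_cluster_def)
  moreover have "finite (Vs i \<inter> Vs j)" using Vs_sub[OF assms(1)] finV by (meson finite_Int finite_subset)
  moreover have "{a,b} \<subseteq> Vs i \<inter> Vs j" using assms by auto
  ultimately have "card {a,b} \<le> 1" by (meson card_mono le_trans)
  with assms(3) show False by simp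
qed

end

locale clus4 = clus +
  assumes no3: "\<not> has_cluster_cycle k Vs 3"
begin

lemma tri:
  assumes "x \<noteq> y" "y \<noteq> z" "x \<noteq> z" "P < k" "Q < k" "R < k"
    "x \<in> Vs P" "y \<in> Vs P" "y \<in> Vs Q" "z \<in> Vs Q" "z \<in> Vs R" "x \<in> Vs R"
  shows "P = Q \<and> Q = R"
proof (cases "P = Q")
  case True
  then show ?thesis using pair[of P R z x] assms by auto
next
  case False
  have "Q \<noteq> R" using pair[of P Q x y] assms False by auto
  moreover have "P \<noteq> R" using pair[of P Q y z] assms False by auto
  ultimately have "has_cluster_cycle k Vs 3"
    using assms False by (intro cyc3[of x y z P Q R]) auto
  with no3 show ?thesis by simp
qed

end

locale clus5 = clus4 +
  assumes no4: "\<not> has_cluster_cycle k Vs 4"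
begin

lemma quad:
  assumes "distinct [x,y,z,u]" "P < k" "Q < k" "R < k" "S < k"
    "x \<in> Vs P" "y \<in> Vs P" "y \<in> Vs Q" "z \<in> Vs Q" "z \<in> Vs R" "u \<in> Vs R"
    "u \<in> Vs S" "x \<in> Vs S"
  shows "P = Q \<and> Q = R \<and> R = S"
proof -
  have d: "x \<noteq> y" "x \<noteq> z" "x \<noteq> u" "y \<noteq> z" "y \<noteq> u" "z \<noteq> u" using assms(1) by auto
  show ?thesis
  proof (cases "P = Q")
    case True
    then show ?thesis using tri[of x z u P R S] assms d by auto
  next
    case PQ: False
    show ?thesis
    proof (cases "Q = R")
      case True
      then show ?thesis using tri[of y u x Q S P] assms d by auto
    next
      case QR: False
      show ?thesis
      proof (cases "R = S")
        case True
        then show ?thesis using tri[of z x y R P Q] assms d by auto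
      next
        case RS: False
        show ?thesis
        proof (cases "S = P")
          case True
          then show ?thesis using tri[of u y z P Q R] assms d by auto
        next
          case SP: False
          show ?thesis
          proof (cases "P = R")
            case True
            then show ?thesis using pair[of P Q y z] assms d PQ by auto
          next
            case PR: False
            show ?thesis
            proof (cases "Q = S")
              case True
              then show ?thesis using pair[of P Q x y] assms d PQ by auto
            next
              case False
              then have "has_cluster_cycle k Vs 4"
                using assms PQ QR RS SP PR by (intro cyc4[of x y z u P Q R S]) auto
              with no4 show ?thesis by simp
            qed
          qed
        qed
      qed
    qed
  qed
qed

end

context clus begin

definition D :: "'a \<Rightarrow> 'a \<Rightarrow> 'a \<Rightarrow> bool" where
  "D v a b \<longleftrightarrow> (\<exists>j<k. \<exists>j'<k. j \<noteq> j' \<and> v \<in> Vs j \<and> v \<in> Vs j' \<and> a \<in> Vs j \<and> b \<in> Vs j' \<and>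
     {a,v} \<in> E \<and> {b,v} \<in> E)"

lemma D_facts:
  assumes "D v a b"
  shows "a \<noteq> b \<and> a \<noteq> v \<and> b \<noteq> v \<and> a \<in> V \<and> b \<in> V \<and> v \<in> V"
proof -
  obtain j j' where jj: "j<k" "j'<k" "j \<noteq> j'" "v \<in> Vs j" "v \<in> Vs j'" "a \<in> Vs j" "b \<in> Vs j'"
    "{a,v} \<in> E" "{b,v} \<in> E" using assms unfolding D_def by blast
  have "a \<noteq> v \<and> a \<in> V \<and> v \<in> V" "b \<noteq> v \<and> b \<in> V" using edge_ne jj by blast+
  moreover have "a \<noteq> b" using pair[of j j' a v] jj calculation by auto
  ultimately show ?thesis by auto
qed

lemma single:
  assumes "S \<subseteq> closed_nbhd V E v" "v \<in> V" "\<forall>a\<in>S. \<forall>b\<in>S. \<not> D v a b"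
  shows "\<exists>j<k. v \<in> Vs j \<and> S \<subseteq> closed_nbhd (Vs j) (induced_edges E (Vs j)) v"
proof (cases "S \<subseteq> {v}")
  case True
  then show ?thesis using cover[OF assms(2)] by (auto simp: closed_nbhd_def)
next
  case False
  then obtain a where a: "a \<in> S" "a \<noteq> v" by auto
  then have "{v,a} \<in> E" using assms(1) by (auto simp: closed_nbhd_def)
  then obtain j where j: "j < k" "{v,a} \<subseteq> Vs j" using edge_part by blast
  have "b \<in> closed_nbhd (Vs j) (induced_edges E (Vs j)) v" if b: "b \<in> S" for b
  proof (cases "b = v")
    case True then show ?thesis by (simp add: closed_nbhd_def)
  next
    case False
    then have bE: "{v,b} \<in> E" using assms(1) b by (auto simp: closed_nbhd_def)
    then obtain j' where j': "j' < k" "{v,b} \<subseteq> Vs j'" using edge_part by blast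
    have "j' = j"
    proof (rule ccontr)
      assume "j' \<noteq> j"
      then have "D v a b" unfolding D_def using j j' bE \<open>{v,a} \<in> E\<close>
        by (intro exI[of _ j] conjI exI[of _ j']) (auto simp: insert_commute)
      then show False using assms(3) a b by blast
    qed
    then show ?thesis using j' bE by (auto simp: closed_nbhd_def induced_edges_def)
  qed
  then show ?thesis using j by blast
qed

end

context clus4 begin

lemma K2:
  assumes "D v a b" "i < k" "a \<in> Vs i" "b \<in> Vs i"
  shows False
proof -
  obtain j j' where jj: "j<k" "j'<k" "j \<noteq> j'" "v \<in> Vs j" "v \<in> Vs j'" "a \<in> Vs j" "b \<in> Vs j'"
    using assms unfolding D_def by blast
  have "a \<noteq> b" "b \<noteq> v" "a \<noteq> v" using D_facts[OF assms(1)] by auto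
  then show False using tri[of a b v i j' j] jj assms by auto
qed

end

context clus5 begin

lemma K:
  assumes "D v a b" "a \<in> closed_nbhd V E w" "b \<in> closed_nbhd V E w"
  shows "w = v"
proof (rule ccontr)
  assume wv: "w \<noteq> v"
  obtain j j' where jj: "j<k" "j'<k" "j \<noteq> j'" "v \<in> Vs j" "v \<in> Vs j'" "a \<in> Vs j" "b \<in> Vs j'"
    using assms unfolding D_def by blast
  have d: "a \<noteq> b" "b \<noteq> v" "a \<noteq> v" using D_facts[OF assms(1)] by auto
  show False
  proof (cases "w = a")
    case True
    then have "{a,b} \<in> E" using assms(3) d by (auto simp: closed_nbhd_def)
    then obtain l where "l < k" "{a,b} \<subseteq> Vs l" using edge_part by blast
    then show False using K2[OF assms(1)] by auto
  next
    case wa: False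
    show False
    proof (cases "w = b")
      case True
      then have "{a,b} \<in> E" using assms(2) d by (auto simp: closed_nbhd_def insert_commute)
      then obtain l where "l < k" "{a,b} \<subseteq> Vs l" using edge_part by blast
      then show False using K2[OF assms(1)] by auto
    next
      case wb: False
      have "{w,a} \<in> E" "{w,b} \<in> E" using assms(2,3) wa wb by (auto simp: closed_nbhd_def)
      then obtain p q where pq: "p < k" "{w,a} \<subseteq> Vs p" "q < k" "{w,b} \<subseteq> Vs q"
        using edge_part by metis
      have "distinct [v,a,w,b]" using d wa wb wv by auto
      then have "j = p \<and> p = q \<and> q = j'"
        using quad[of v a w b j p q j'] jj pq by auto
      with jj show False by simp
    qed
  qed
qed

end

lemma closed_nbhd_sub: "v \<in> W \<Longrightarrow> closed_nbhd W F v \<subseteq> W"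
  unfolding closed_nbhd_def by auto

lemma closed_nbhd_self: "v \<in> closed_nbhd W F v"
  unfolding closed_nbhd_def by simp

lemma nbhd_sub: "\<sigma> \<in> nbhd_complex W F \<Longrightarrow> \<sigma> \<subseteq> W"
proof -
  assume "\<sigma> \<in> nbhd_complex W F"
  then obtain v where "v \<in> W" "\<sigma> \<subseteq> closed_nbhd W F v" by (auto simp: nbhd_complex_def)
  then show "\<sigma> \<subseteq> W" using closed_nbhd_sub[of v W F] by (rule_tac subset_trans)
qed

lemma single_nbhd: "x \<in> W \<Longrightarrow> {x} \<in> nbhd_complex W F"
  unfolding nbhd_complex_def using closed_nbhd_self[of x W F] by auto

lemma cverts_nbhd: "cverts (nbhd_complex W F) = W"
proof (intro equalityI subsetI)
  fix x assume "x \<in> cverts (nbhd_complex W F)"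
  then obtain \<sigma> where "x \<in> \<sigma>" "\<sigma> \<in> nbhd_complex W F" unfolding cverts_def by (rule UnionE)
  then show "x \<in> W" using nbhd_sub by (rule_tac subsetD)
next
  fix x assume x: "x \<in> W"
  then show "x \<in> cverts (nbhd_complex W F)" unfolding cverts_def using single_nbhd[OF x, of F] by (intro UnionI[of "{x}"]) auto
qed

lemma cverts_clique: "cverts (clique_complex W F) = W"
proof (intro equalityI subsetI)
  fix x assume "x \<in> cverts (clique_complex W F)"
  then obtain \<sigma> where "x \<in> \<sigma>" "\<sigma> \<in> clique_complex W F" unfolding cverts_def by blast
  moreover have "\<sigma> \<subseteq> W" using calculation(2) by (simp add: clique_complex_def)
  ultimately show "x \<in> W" by blast
next
  fix x assume "x \<in> W"
  then have "{x} \<in> clique_complex W F" unfolding clique_complex_def by simp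
  then show "x \<in> cverts (clique_complex W F)" unfolding cverts_def by blast
qed

lemma sc_nbhd: "finite W \<Longrightarrow> simplicial_complex (nbhd_complex W F)"
proof -
  assume W: "finite W"
  have "nbhd_complex W F \<subseteq> Pow W" using nbhd_sub by (intro subsetI) (simp add: Pow_def)
  then have "finite (nbhd_complex W F)" using W by (meson finite_Pow_iff finite_subset)
  moreover have "\<forall>\<sigma>\<in>nbhd_complex W F. finite \<sigma> \<and> \<sigma> \<noteq> {}"
  proof
    fix \<sigma> assume s: "\<sigma> \<in> nbhd_complex W F"
    then have "finite \<sigma>" using nbhd_sub[OF s] W by (rule_tac finite_subset)
    moreover have "\<sigma> \<noteq> {}" using s by (simp add: nbhd_complex_def)
    ultimately show "finite \<sigma> \<and> \<sigma> \<noteq> {}" by simp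
  qed
  moreover have "\<forall>\<sigma>\<in>nbhd_complex W F. \<forall>\<tau>. \<tau> \<subseteq> \<sigma> \<and> \<tau> \<noteq> {} \<longrightarrow> \<tau> \<in> nbhd_complex W F"
  proof (intro ballI allI impI)
    fix \<sigma> \<tau> assume s: "\<sigma> \<in> nbhd_complex W F" and t: "\<tau> \<subseteq> \<sigma> \<and> \<tau> \<noteq> {}"
    from s obtain v where "v \<in> W" "\<sigma> \<subseteq> closed_nbhd W F v" by (auto simp: nbhd_complex_def)
    then have "\<tau> \<subseteq> closed_nbhd W F v" using t by (rule_tac subset_trans) auto
    then show "\<tau> \<in> nbhd_complex W F" using t \<open>v \<in> W\<close> by (auto simp: nbhd_complex_def)
  qed
  ultimately show ?thesis unfolding simplicial_complex_def by (intro conjI)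
qed

lemma sc_clique: "finite W \<Longrightarrow> simplicial_complex (clique_complex W F)"
proof -
  assume W: "finite W"
  have "clique_complex W F \<subseteq> Pow W" by (rule subsetI) (simp add: clique_complex_def)
  then have "finite (clique_complex W F)" using W by (meson finite_Pow_iff finite_subset)
  moreover have "\<forall>\<sigma>\<in>clique_complex W F. finite \<sigma> \<and> \<sigma> \<noteq> {}"
    by (simp add: clique_complex_def)
  moreover have "\<forall>\<sigma>\<in>clique_complex W F. \<forall>\<tau>. \<tau> \<subseteq> \<sigma> \<and> \<tau> \<noteq> {} \<longrightarrow> \<tau> \<in> clique_complex W F"
  proof (intro ballI allI impI)
    fix \<sigma> \<tau> assume s: "\<sigma> \<in> clique_complex W F" and t: "\<tau> \<subseteq> \<sigma> \<and> \<tau> \<noteq> {}"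
    have s1: "\<sigma> \<subseteq> W" "finite \<sigma>" "\<forall>u\<in>\<sigma>. \<forall>v\<in>\<sigma>. u \<noteq> v \<longrightarrow> {u, v} \<in> F"
      using s by (simp_all add: clique_complex_def)
    have "finite \<tau>" using s1(2) t finite_subset by blast
    moreover have "\<tau> \<subseteq> W" using s1(1) t by blast
    moreover have "\<forall>u\<in>\<tau>. \<forall>v\<in>\<tau>. u \<noteq> v \<longrightarrow> {u, v} \<in> F"
    proof (intro ballI impI)
      fix u v assume "u \<in> \<tau>" "v \<in> \<tau>" "u \<noteq> v"
      then have "u \<in> \<sigma>" "v \<in> \<sigma>" using t by auto
      then show "{u, v} \<in> F" using s1(3) \<open>u \<noteq> v\<close> by blast
    qed
    ultimately show "\<tau> \<in> clique_complex W F" using t by (simp add: clique_complex_def)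
  qed
  ultimately show ?thesis unfolding simplicial_complex_def by blast
qed

lemma sc_UN: "finite I \<Longrightarrow> (\<forall>i\<in>I. simplicial_complex (K i)) \<Longrightarrow> simplicial_complex (\<Union>i\<in>I. K i)"
  unfolding simplicial_complex_def by blast

lemma cverts_UN: "cverts (\<Union>i\<in>I. K i) = (\<Union>i\<in>I. cverts (K i))"
  unfolding cverts_def by blast

lemma iso_refl: "complex_iso K K"
  unfolding complex_iso_def by (intro exI[of _ id]) auto

context clus begin

lemma cluster_gen:
  assumes sc: "\<forall>i<k. simplicial_complex (K i)" and cv: "\<forall>i<k. cverts (K i) = Vs i"
    and sg: "\<forall>i<k. \<forall>s\<in>Vs i. {s} \<in> K i"
  shows "complex_cluster (\<Union>i<k. K i) k K \<and> shape (cverts (\<Union>i<k. K i)) k (\<lambda>i. cverts (K i)) = shape V k Vs"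
proof
  have cvU: "cverts (\<Union>i<k. K i) = V" using cv gc by (simp add: cverts_UN graph_cluster_def)
  show "shape (cverts (\<Union>i<k. K i)) k (\<lambda>i. cverts (K i)) = shape V k Vs"
    unfolding shape_def cvU using cv by auto
  have ind: "induced_subcomplex (K i) (\<Union>i<k. K i)" if i: "i < k" for i
    unfolding induced_subcomplex_def
  proof (intro conjI ballI impI)
    show "K i \<subseteq> (\<Union>i<k. K i)" using i by blast
    fix \<sigma> assume \<sigma>: "\<sigma> \<in> (\<Union>i<k. K i)" and sub: "\<sigma> \<subseteq> cverts (K i)"
    then obtain j where j: "j < k" "\<sigma> \<in> K j" by blast
    show "\<sigma> \<in> K i"
    proof (cases "j = i")
      case True then show ?thesis using j by simp
    next
      case False
      have sj: "\<sigma> \<subseteq> Vs j" using j cv unfolding cverts_def by blast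
      have si: "\<sigma> \<subseteq> Vs i" using sub cv i by simp
      have "\<sigma> \<noteq> {}" using sc j unfolding simplicial_complex_def by blast
      then obtain s where s: "s \<in> \<sigma>" by blast
      have "\<sigma> = {s}"
      proof (intro equalityI subsetI)
        fix t assume t: "t \<in> \<sigma>"
        show "t \<in> {s}"
        proof (rule ccontr)
          assume "t \<notin> {s}"
          then have "i = j" using pair[of i j s t] i j s t si sj by auto
          with False show False by simp
        qed
      qed (use s in auto)
      then show ?thesis using sg i si by auto
    qed
  qed
  show "complex_cluster (\<Union>i<k. K i) k K"
    unfolding complex_cluster_def
  proof (intro conjI allI impI)
    show "simplicial_complex (\<Union>i<k. K i)" using sc by (intro sc_UN) auto
    show "\<And>i. i < k \<Longrightarrow> simplicial_complex (K i)" using sc by blast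
    show "\<And>i. i < k \<Longrightarrow> induced_subcomplex (K i) (\<Union>i<k. K i)" using ind by blast
    show "(\<Union>i<k. K i) = (\<Union>i<k. K i)" by simp
    show "\<And>i j. i < k \<Longrightarrow> j < k \<Longrightarrow> i \<noteq> j \<Longrightarrow> card (cverts (K i) \<inter> cverts (K j)) \<le> 1"
      using cv gc by (simp add: graph_cluster_def)
  qed
qed

end

context clus4 begin

lemma clique_eq: "clique_complex V E = (\<Union>i<k. clique_complex (Vs i) (induced_edges E (Vs i)))"
proof (rule equalityI; rule subsetI)
  fix \<sigma> assume \<sigma>: "\<sigma> \<in> clique_complex V E"
  then have ne: "\<sigma> \<noteq> {}" and sV: "\<sigma> \<subseteq> V" and fin: "finite \<sigma>"
    and cl: "\<forall>u\<in>\<sigma>. \<forall>v\<in>\<sigma>. u \<noteq> v \<longrightarrow> {u, v} \<in> E"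
    unfolding clique_complex_def by auto
  obtain i where i: "i < k" "\<sigma> \<subseteq> Vs i"
  proof (cases "\<exists>a\<in>\<sigma>. \<exists>b\<in>\<sigma>. a \<noteq> b")
    case True
    then obtain a b where ab: "a \<in> \<sigma>" "b \<in> \<sigma>" "a \<noteq> b" by blast
    then have "{a,b} \<in> E" using cl by blast
    then obtain i where i: "i < k" "{a,b} \<subseteq> Vs i" using edge_part by blast
    have "c \<in> Vs i" if c: "c \<in> \<sigma>" for c
    proof (cases "c = a \<or> c = b")
      case True then show ?thesis using i by auto
    next
      case False
      then have "{a,c} \<in> E" "{b,c} \<in> E" using cl ab c by auto
      then obtain p q where pq: "p < k" "{a,c} \<subseteq> Vs p" "q < k" "{b,c} \<subseteq> Vs q"
        using edge_part[of "{a,c}"] edge_part[of "{b,c}"] by blast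
      have m: "a \<in> Vs i" "b \<in> Vs i" "b \<in> Vs q" "c \<in> Vs q" "c \<in> Vs p" "a \<in> Vs p"
        using i pq by auto
      have d: "a \<noteq> b" "b \<noteq> c" "a \<noteq> c" using ab False by auto
      have "i = q" using tri[OF d \<open>i < k\<close> pq(3) pq(1) m] by blast
      then show ?thesis using m by simp
    qed
    then show ?thesis using that i by blast
  next
    case False
    then obtain s where "\<sigma> = {s}" using ne by blast
    then show ?thesis using that cover sV by blast
  qed
  have "\<sigma> \<in> clique_complex (Vs i) (induced_edges E (Vs i))"
    using ne fin cl i unfolding clique_complex_def induced_edges_def by blast
  then show "\<sigma> \<in> (\<Union>i<k. clique_complex (Vs i) (induced_edges E (Vs i)))" using i by blast
next
  fix \<sigma> assume "\<sigma> \<in> (\<Union>i<k. clique_complex (Vs i) (induced_edges E (Vs i)))"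
  then obtain i where "i < k" "\<sigma> \<in> clique_complex (Vs i) (induced_edges E (Vs i))" by blast
  then have "\<sigma> \<noteq> {} \<and> \<sigma> \<subseteq> Vs i \<and> finite \<sigma> \<and> (\<forall>u\<in>\<sigma>. \<forall>v\<in>\<sigma>. u \<noteq> v \<longrightarrow> {u,v} \<in> E)"
    unfolding clique_complex_def induced_edges_def by simp
  moreover have "\<sigma> \<subseteq> V" using calculation Vs_sub[OF \<open>i < k\<close>] by (meson subset_trans)
  ultimately show "\<sigma> \<in> clique_complex V E" by (simp add: clique_complex_def)
qed

lemma part1:
  "\<exists>X. complex_cluster X k (\<lambda>i. clique_complex (Vs i) (induced_edges E (Vs i))) \<and>
       shape (cverts X) k (\<lambda>i. cverts (clique_complex (Vs i) (induced_edges E (Vs i)))) = shape V k Vs \<and>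
       complex_iso (clique_complex V E) X"
proof (intro exI conjI)
  let ?K = "\<lambda>i. clique_complex (Vs i) (induced_edges E (Vs i))"
  have sc: "\<forall>i<k. simplicial_complex (?K i)" using Vs_sub finV by (auto intro!: sc_clique intro: finite_subset)
  have cv: "\<forall>i<k. cverts (?K i) = Vs i" by (simp add: cverts_clique)
  have sg: "\<forall>i<k. \<forall>s\<in>Vs i. {s} \<in> ?K i" by (auto simp: clique_complex_def)
  note cg = cluster_gen[OF sc cv sg]
  show "complex_cluster (\<Union>i<k. ?K i) k ?K" using cg by blast
  show "shape (cverts (\<Union>i<k. ?K i)) k (\<lambda>i. cverts (?K i)) = shape V k Vs" using cg by blast
  show "complex_iso (clique_complex V E) (\<Union>i<k. ?K i)" unfolding clique_eq[symmetric] by (rule iso_refl)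
qed

end

definition rset :: "'a set \<Rightarrow> 'a set set \<Rightarrow> ('a \<Rightarrow> real) set" where
  "rset W K = {f. f \<in> extensional W \<and> (\<forall>v\<in>W. 0 \<le> f v) \<and> sum f W = 1 \<and> {v\<in>W. f v \<noteq> 0} \<in> K}"

lemma real_eq: "cverts K = W \<Longrightarrow> realization K = subtopology (powertop_real W) (rset W K)"
  by (simp add: realization_def rset_def)

lemma top_real: "topspace (subtopology (powertop_real W) (rset W K)) = rset W K"
  by (auto simp: rset_def PiE_def)

lemma rset_mono: "K \<subseteq> L \<Longrightarrow> rset W K \<subseteq> rset W L"
  unfolding rset_def by blast

lemma cont_proj: "a \<in> W \<Longrightarrow> continuous_map (subtopology (powertop_real W) S) euclideanreal (\<lambda>x. x a)"
  by (rule continuous_map_from_subtopology) (rule continuous_map_product_projection)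

lemma cont_Max:
  assumes "finite S" "\<forall>s\<in>S. continuous_map T euclideanreal (f s)"
  shows "continuous_map T euclideanreal (\<lambda>x. Max (insert 0 ((\<lambda>s. f s x) ` S)))"
  using assms
proof (induction S rule: finite_induct)
  case empty
  then show ?case by simp
next
  case (insert s S)
  have eq: "(\<lambda>x. Max (insert 0 ((\<lambda>s. f s x) ` insert s S))) = (\<lambda>x. max (f s x) (Max (insert 0 ((\<lambda>s. f s x) ` S))))"
  proof
    fix x
    have "insert 0 ((\<lambda>s. f s x) ` insert s S) = insert (f s x) (insert 0 ((\<lambda>s. f s x) ` S))" by auto
    then show "Max (insert 0 ((\<lambda>s. f s x) ` insert s S)) = max (f s x) (Max (insert 0 ((\<lambda>s. f s x) ` S)))"
      using insert.hyps(1) by (simp add: Max_insert)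
  qed
  show ?case unfolding eq using insert by (intro continuous_map_real_max) auto
qed

lemma sum_single:
  assumes "finite A" "\<And>w. w \<in> A \<Longrightarrow> w \<noteq> v \<Longrightarrow> f w = 0"
  shows "sum f A = (if v \<in> A then f v else 0)"
proof (cases "v \<in> A")
  case True
  then have "sum f A = f v + sum f (A - {v})" using assms(1) by (simp add: sum.remove)
  moreover have "sum f (A - {v}) = 0" using assms(2) by (intro sum.neutral) auto
  ultimately show ?thesis using True by simp
next
  case False
  then show ?thesis using assms(2) by (auto intro: sum.neutral)
qed

context clus begin

definition Dset :: "'a \<Rightarrow> ('a \<times> 'a) set" where
  "Dset v = {p. D v (fst p) (snd p)}"

lemma Dset_sub: "Dset v \<subseteq> V \<times> V"
  using D_facts unfolding Dset_def by fastforce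

lemma fin_Dset: "finite (Dset v)"
  using Dset_sub finV by (meson finite_SigmaI finite_subset)

definition cc :: "'a \<Rightarrow> ('a \<Rightarrow> real) \<Rightarrow> real" where
  "cc v x = Max (insert 0 ((\<lambda>p. min (x (fst p)) (x (snd p))) ` Dset v))"

definition nbr :: "'a \<Rightarrow> 'a set" where
  "nbr u = {w \<in> V. {u,w} \<in> E}"

lemma fin_nbr: "finite (nbr u)"
  unfolding nbr_def using finV by simp

definition phi :: "('a \<Rightarrow> real) \<Rightarrow> ('a \<Rightarrow> real)" where
  "phi x = (\<lambda>u. if u \<in> V then x u - (\<Sum>w\<in>nbr u. min (x u) (cc w x)) + (\<Sum>a\<in>nbr u. min (x a) (cc u x)) else undefined)"

lemma cc_nonneg: "0 \<le> cc v x"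
  unfolding cc_def using fin_Dset by (intro Max_ge) auto

lemma cc_ge: "D v a b \<Longrightarrow> min (x a) (x b) \<le> cc v x"
  unfolding cc_def using fin_Dset by (intro Max_ge) (auto simp: Dset_def image_iff)

lemma cc_pos: "0 < cc v x \<Longrightarrow> \<exists>a b. D v a b \<and> cc v x = min (x a) (x b)"
proof -
  assume p: "0 < cc v x"
  have "cc v x \<in> insert 0 ((\<lambda>p. min (x (fst p)) (x (snd p))) ` Dset v)"
    unfolding cc_def using fin_Dset by (intro Max_in) auto
  with p show ?thesis by (auto simp: Dset_def)
qed

lemma phi_ext: "phi x \<in> extensional V"
  unfolding phi_def extensional_def by simp

lemma phi_zero:
  assumes "x \<in> extensional V" "\<forall>v\<in>V. 0 \<le> x v" "\<forall>w\<in>V. cc w x = 0"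
  shows "phi x = x"
proof
  fix u
  show "phi x u = x u"
  proof (cases "u \<in> V")
    case True
    have "(\<Sum>w\<in>nbr u. min (x u) (cc w x)) = 0"
      using assms True by (intro sum.neutral) (auto simp: nbr_def)
    moreover have "(\<Sum>a\<in>nbr u. min (x a) (cc u x)) = 0"
      using assms True by (intro sum.neutral) (auto simp: nbr_def)
    ultimately show ?thesis using True by (simp add: phi_def)
  next
    case False
    then show ?thesis using assms(1) by (simp add: phi_def extensional_def)
  qed
qed

lemma cont_cc: "continuous_map (subtopology (powertop_real V) S) euclideanreal (cc v)"
proof -
  have "continuous_map (subtopology (powertop_real V) S) euclideanreal
     (\<lambda>x. Max (insert 0 ((\<lambda>p. (\<lambda>p x. min (x (fst p)) (x (snd p))) p x) ` Dset v)))"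
  proof (rule cont_Max[OF fin_Dset], rule ballI)
    fix p assume "p \<in> Dset v"
    then have "p \<in> V \<times> V" by (rule subsetD[OF Dset_sub[of v]])
    then have "fst p \<in> V" "snd p \<in> V" by (auto simp: mem_Times_iff)
    then show "continuous_map (subtopology (powertop_real V) S) euclideanreal (\<lambda>x. min (x (fst p)) (x (snd p)))"
      by (intro continuous_map_real_min cont_proj)
  qed
  then show ?thesis unfolding cc_def[abs_def] by simp
qed

lemma cont_phi_coord:
  assumes "u \<in> V"
  shows "continuous_map (subtopology (powertop_real V) S) euclideanreal (\<lambda>x. phi x u)"
proof -
  have "(\<lambda>x. phi x u) = (\<lambda>x. x u - (\<Sum>w\<in>nbr u. min (x u) (cc w x)) + (\<Sum>a\<in>nbr u. min (x a) (cc u x)))"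
    using assms by (simp add: phi_def)
  moreover have "continuous_map (subtopology (powertop_real V) S) euclideanreal
     (\<lambda>x. x u - (\<Sum>w\<in>nbr u. min (x u) (cc w x)) + (\<Sum>a\<in>nbr u. min (x a) (cc u x)))"
  proof (intro continuous_map_add continuous_map_diff continuous_map_sum fin_nbr cont_proj assms
      continuous_map_real_min cont_cc)
    fix a assume "a \<in> nbr u"
    then show "a \<in> V" by (simp add: nbr_def)
  qed
  ultimately show ?thesis by simp
qed

end

lemma sum_pos_ex: "sum f W = (1::real) \<Longrightarrow> {v\<in>W. f v \<noteq> 0} \<noteq> {}"
proof
  assume s: "sum f W = 1" and e: "{v\<in>W. f v \<noteq> 0} = {}"
  then have "sum f W = 0" by (intro sum.neutral) auto
  with s show False by simp
qed

context clus begin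

abbreviation NG where "NG \<equiv> nbhd_complex V E"
abbreviation XK where "XK \<equiv> (\<Union>i<k. nbhd_complex (Vs i) (induced_edges E (Vs i)))"

lemma cverts_NG: "cverts NG = V" by (rule cverts_nbhd)

lemma cverts_XK: "cverts XK = V"
  using gc by (simp add: cverts_UN cverts_nbhd graph_cluster_def)

lemma XK_sub: "XK \<subseteq> NG"
proof
  fix \<sigma> assume "\<sigma> \<in> XK"
  then obtain i where i: "i < k" "\<sigma> \<in> nbhd_complex (Vs i) (induced_edges E (Vs i))" by blast
  then obtain w where w: "w \<in> Vs i" "\<sigma> \<subseteq> closed_nbhd (Vs i) (induced_edges E (Vs i)) w" "\<sigma> \<noteq> {}"
    by (auto simp: nbhd_complex_def)
  have wV: "w \<in> V" by (rule subsetD[OF Vs_sub[OF i(1)] w(1)])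
  have "closed_nbhd (Vs i) (induced_edges E (Vs i)) w \<subseteq> closed_nbhd V E w"
    using Vs_sub[OF i(1)] unfolding closed_nbhd_def induced_edges_def by auto
  then have "\<sigma> \<subseteq> closed_nbhd V E w" using w(2) by (rule_tac subset_trans)
  then show "\<sigma> \<in> NG" using w(3) wV unfolding nbhd_complex_def by auto
qed

end

context clus5 begin

lemma phi_props:
  assumes x: "x \<in> rset V NG"
  shows "phi x \<in> rset V XK \<and> (\<exists>w\<in>V. {u\<in>V. x u \<noteq> 0} \<union> {u\<in>V. phi x u \<noteq> 0} \<subseteq> closed_nbhd V E w)"
proof -
  have ext: "x \<in> extensional V" and nn: "\<forall>v\<in>V. 0 \<le> x v" and s1: "sum x V = 1"
    and sN: "{u\<in>V. x u \<noteq> 0} \<in> NG" using x by (auto simp: rset_def)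
  define S where "S = {u\<in>V. x u \<noteq> 0}"
  obtain w0 where w0: "w0 \<in> V" "S \<subseteq> closed_nbhd V E w0" using sN unfolding S_def nbhd_complex_def by auto
  have Sne: "S \<noteq> {}" using sum_pos_ex[OF s1] unfolding S_def .
  have inS: "a \<in> S" if "a \<in> V" "0 < x a" for a using that unfolding S_def by auto
  have Din: "a \<in> S \<and> b \<in> S" if "D v a b" "0 < min (x a) (x b)" for v a b
    using that D_facts[OF that(1)] inS by auto
  show ?thesis
  proof (cases "\<forall>w\<in>V. cc w x = 0")
    case True
    then have px: "phi x = x" using phi_zero ext nn by blast
    have "\<forall>a\<in>S. \<forall>b\<in>S. \<not> D w0 a b"
    proof (intro ballI notI)
      fix a b assume ab: "a \<in> S" "b \<in> S" "D w0 a b"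
      then have "0 < x a" "0 < x b" using nn unfolding S_def by (auto simp: order_le_less)
      then have "0 < min (x a) (x b)" by simp
      also have "\<dots> \<le> cc w0 x" using cc_ge[OF ab(3)] .
      finally show False using True w0(1) by simp
    qed
    then obtain j where j: "j < k" "w0 \<in> Vs j" "S \<subseteq> closed_nbhd (Vs j) (induced_edges E (Vs j)) w0"
      using single[OF w0(2) w0(1)] by blast
    then have "S \<in> nbhd_complex (Vs j) (induced_edges E (Vs j))"
      using Sne unfolding nbhd_complex_def by auto
    then have "S \<in> XK" using j(1) by blast
    then have "x \<in> rset V XK" using ext nn s1 unfolding rset_def S_def by auto
    then show ?thesis using px w0 unfolding S_def by auto
  next
    case False
    then obtain v where vV: "v \<in> V" and "cc v x \<noteq> 0" by blast
    then have gpos: "0 < cc v x" using cc_nonneg[of v x] by simp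
    define \<gamma> where "\<gamma> = cc v x"
    obtain a b where ab: "D v a b" "cc v x = min (x a) (x b)" using cc_pos[OF gpos] by blast
    then have "a \<in> S \<and> b \<in> S" using Din gpos by auto
    then have "w0 = v" using K[OF ab(1)] w0(2) by auto
    then have Sv: "S \<subseteq> closed_nbhd V E v" using w0 by simp
    have other: "cc w x = 0" if "w \<in> V" "w \<noteq> v" for w
    proof (rule ccontr)
      assume "cc w x \<noteq> 0"
      then have "0 < cc w x" using cc_nonneg[of w x] by simp
      then obtain a' b' where ab': "D w a' b'" "cc w x = min (x a') (x b')" using cc_pos by blast
      then have "a' \<in> S \<and> b' \<in> S" using Din \<open>0 < cc w x\<close> by auto
      then have "v = w" using K[OF ab'(1)] Sv by auto
      with that show False by simp
    qed
    define T where "T = (\<Sum>a\<in>nbr v. min (x a) \<gamma>)"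
    have T0: "0 \<le> T" unfolding T_def using nn gpos \<gamma>_def by (intro sum_nonneg) (auto simp: nbr_def)
    have form: "phi x u = x u - (if {v,u} \<in> E then min (x u) \<gamma> else 0) + (if u = v then T else 0)"
      if uV: "u \<in> V" for u
    proof -
      have "(\<Sum>w\<in>nbr u. min (x u) (cc w x)) = (if v \<in> nbr u then min (x u) (cc v x) else 0)"
      proof (rule sum_single[OF fin_nbr])
        fix w assume "w \<in> nbr u" "w \<noteq> v"
        then have "cc w x = 0" using other by (auto simp: nbr_def)
        then show "min (x u) (cc w x) = 0" using nn uV by simp
      qed
      moreover have "(v \<in> nbr u) = ({v,u} \<in> E)" using vV by (auto simp: nbr_def insert_commute)
      moreover have "(\<Sum>a\<in>nbr u. min (x a) (cc u x)) = (if u = v then T else 0)"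
      proof (cases "u = v")
        case True then show ?thesis by (simp add: T_def \<gamma>_def)
      next
        case False
        then have "cc u x = 0" using other uV by simp
        then have "(\<Sum>a\<in>nbr u. min (x a) (cc u x)) = 0"
          using nn by (intro sum.neutral) (auto simp: nbr_def)
        then show ?thesis using False by simp
      qed
      ultimately show ?thesis using uV by (simp add: phi_def \<gamma>_def)
    qed
    define P where "P = {u\<in>V. phi x u \<noteq> 0}"
    have Pinfo: "u = v \<or> ({v,u} \<in> E \<and> \<gamma> < x u)" if "u \<in> P" for u
    proof (cases "u = v")
      case False
      have uV: "u \<in> V" and nz: "phi x u \<noteq> 0" using that by (auto simp: P_def)
      show ?thesis
      proof (cases "{v,u} \<in> E")
        case True
        then have "x u - min (x u) \<gamma> \<noteq> 0" using form[OF uV] False nz by simp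
        then show ?thesis using True by (auto simp: min_def split: if_splits)
      next
        case nE: False
        then have "x u \<noteq> 0" using form[OF uV] False nz by simp
        then have "u \<in> S" using uV by (simp add: S_def)
        then have "u \<in> closed_nbhd V E v" by (rule subsetD[OF Sv])
        then show ?thesis using nE False by (simp add: closed_nbhd_def)
      qed
    qed simp
    have Psub: "P \<subseteq> closed_nbhd V E v"
    proof
      fix u assume "u \<in> P"
      then have "u \<in> V" by (simp add: P_def)
      then show "u \<in> closed_nbhd V E v" using Pinfo[OF \<open>u \<in> P\<close>] by (auto simp: closed_nbhd_def)
    qed
    have noD: "\<forall>a\<in>P. \<forall>b\<in>P. \<not> D v a b"
    proof (intro ballI notI)
      fix a b assume abP: "a \<in> P" "b \<in> P" and d: "D v a b"
      have "a \<noteq> v" "b \<noteq> v" using D_facts[OF d] by auto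
      then have "\<gamma> < x a" "\<gamma> < x b" using Pinfo abP by auto
      then have "\<gamma> < min (x a) (x b)" by simp
      also have "\<dots> \<le> cc v x" using cc_ge[OF d] .
      finally show False by (simp add: \<gamma>_def)
    qed
    have nnp: "\<forall>u\<in>V. 0 \<le> phi x u"
    proof
      fix u assume uV: "u \<in> V"
      have "0 \<le> x u - (if {v,u} \<in> E then min (x u) \<gamma> else 0)" using nn uV by auto
      then show "0 \<le> phi x u" using form[OF uV] T0 by simp
    qed
    have "sum (phi x) V = sum x V - (\<Sum>u\<in>V. if {v,u} \<in> E then min (x u) \<gamma> else 0) + (\<Sum>u\<in>V. if u = v then T else 0)"
      using form by (simp add: sum.distrib sum_subtractf)
    also have "(\<Sum>u\<in>V. if {v,u} \<in> E then min (x u) \<gamma> else 0) = T"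
      unfolding T_def nbr_def using finV by (simp add: sum.inter_filter)
    also have "(\<Sum>u\<in>V. if u = v then T else 0) = T" using finV vV by (simp add: sum.delta)
    finally have sp: "sum (phi x) V = 1" using s1 by simp
    have Pne: "P \<noteq> {}" using sum_pos_ex[OF sp] unfolding P_def .
    obtain j where j: "j < k" "v \<in> Vs j" "P \<subseteq> closed_nbhd (Vs j) (induced_edges E (Vs j)) v"
      using single[OF Psub vV noD] by blast
    then have "P \<in> nbhd_complex (Vs j) (induced_edges E (Vs j))"
      using Pne unfolding nbhd_complex_def by auto
    then have "P \<in> XK" using j(1) by blast
    then have "phi x \<in> rset V XK" using phi_ext nnp sp unfolding rset_def P_def by auto
    moreover have "S \<union> P \<subseteq> closed_nbhd V E v" using Sv Psub by simp
    ultimately show ?thesis using vV unfolding S_def P_def by blast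
  qed
qed

lemma phi_id:
  assumes x: "x \<in> rset V XK"
  shows "phi x = x"
proof -
  have ext: "x \<in> extensional V" and nn: "\<forall>v\<in>V. 0 \<le> x v"
    and sX: "{u\<in>V. x u \<noteq> 0} \<in> XK" using x by (auto simp: rset_def)
  then obtain i where i: "i < k" "{u\<in>V. x u \<noteq> 0} \<in> nbhd_complex (Vs i) (induced_edges E (Vs i))" by blast
  then have Si: "{u\<in>V. x u \<noteq> 0} \<subseteq> Vs i" by (rule_tac nbhd_sub)
  have "cc w x = 0" if "w \<in> V" for w
  proof (rule ccontr)
    assume "cc w x \<noteq> 0"
    then have "0 < cc w x" using cc_nonneg[of w x] by simp
    then obtain a b where ab: "D w a b" "cc w x = min (x a) (x b)" using cc_pos by blast
    then have "x a \<noteq> 0" "x b \<noteq> 0" using \<open>0 < cc w x\<close> by auto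
    moreover have "a \<in> V" "b \<in> V" using D_facts[OF ab(1)] by auto
    ultimately have "a \<in> Vs i" "b \<in> Vs i" using Si by auto
    then show False using K2[OF ab(1) i(1)] by simp
  qed
  then show ?thesis using phi_zero ext nn by blast
qed

lemma cont_phi: "continuous_map (realization NG) (realization XK) phi"
  unfolding real_eq[OF cverts_NG] real_eq[OF cverts_XK] continuous_map_in_subtopology
proof
  show "continuous_map (subtopology (powertop_real V) (rset V NG)) (powertop_real V) phi"
    unfolding continuous_map_componentwise
  proof
    show "phi ` topspace (subtopology (powertop_real V) (rset V NG)) \<subseteq> extensional V"
      using phi_ext by blast
    show "\<forall>k\<in>V. continuous_map (subtopology (powertop_real V) (rset V NG)) euclideanreal (\<lambda>x. phi x k)"
      using cont_phi_coord by blast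
  qed
  show "phi \<in> topspace (subtopology (powertop_real V) (rset V NG)) \<rightarrow> rset V XK"
    unfolding top_real using phi_props by blast
qed

lemma cont_incl: "continuous_map (realization XK) (realization NG) id"
  unfolding real_eq[OF cverts_NG] real_eq[OF cverts_XK] continuous_map_in_subtopology
proof
  show "continuous_map (subtopology (powertop_real V) (rset V XK)) (powertop_real V) id"
    by (rule continuous_map_from_subtopology) (rule continuous_map_id)
  show "id \<in> topspace (subtopology (powertop_real V) (rset V XK)) \<rightarrow> rset V NG"
    unfolding top_real using subsetD[OF rset_mono[OF XK_sub, of V]] by auto
qed

end

context clus5 begin

lemma homot1: "homotopic_with (\<lambda>x. True) (realization NG) (realization NG) (id \<circ> phi) id"
proof -
  let ?R = "subtopology (powertop_real V) (rset V NG)"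
  let ?Z = "prod_topology (top_of_set {0..1::real}) ?R"
  define g where "g = (\<lambda>z::real \<times> ('a \<Rightarrow> real). restrict (\<lambda>u. (1 - fst z) * phi (snd z) u + fst z * snd z u) V)"
  define h where "h = (\<lambda>z::real \<times> ('a \<Rightarrow> real). if fst z = 1 then snd z else g z)"
  have gin: "g z \<in> rset V NG" if z: "z \<in> topspace ?Z" for z
  proof -
    obtain t x where zz: "z = (t,x)" by (cases z)
    have t: "0 \<le> t" "t \<le> 1" and x: "x \<in> rset V NG" using z zz top_real by auto
    have pr: "phi x \<in> rset V XK" and ex: "\<exists>w\<in>V. {u\<in>V. x u \<noteq> 0} \<union> {u\<in>V. phi x u \<noteq> 0} \<subseteq> closed_nbhd V E w"
      using phi_props[OF x] by auto
    have nnx: "\<forall>v\<in>V. 0 \<le> x v" and s1: "sum x V = 1" using x by (auto simp: rset_def)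
    have nnp: "\<forall>v\<in>V. 0 \<le> phi x v" and sp: "sum (phi x) V = 1" using pr by (auto simp: rset_def)
    have gz: "g z = restrict (\<lambda>u. (1 - t) * phi x u + t * x u) V" by (simp add: g_def zz)
    have "sum (g z) V = (1 - t) * sum (phi x) V + t * sum x V"
      unfolding gz by (simp add: sum.distrib sum_distrib_left)
    then have sg: "sum (g z) V = 1" using s1 sp by simp
    have nng: "\<forall>v\<in>V. 0 \<le> g z v" using nnx nnp t unfolding gz by simp
    obtain w where w: "w \<in> V" "{u\<in>V. x u \<noteq> 0} \<union> {u\<in>V. phi x u \<noteq> 0} \<subseteq> closed_nbhd V E w"
      using ex by blast
    have "{u\<in>V. g z u \<noteq> 0} \<subseteq> {u\<in>V. x u \<noteq> 0} \<union> {u\<in>V. phi x u \<noteq> 0}"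
      unfolding gz by auto
    then have "{u\<in>V. g z u \<noteq> 0} \<subseteq> closed_nbhd V E w" using w(2) by (rule subset_trans)
    moreover have "{u\<in>V. g z u \<noteq> 0} \<noteq> {}" using sum_pos_ex[OF sg] .
    ultimately have "{u\<in>V. g z u \<noteq> 0} \<in> NG" using w(1) unfolding nbhd_complex_def by auto
    moreover have "g z \<in> extensional V" unfolding gz by simp
    ultimately show ?thesis using sg nng unfolding rset_def by auto
  qed
  have contg: "continuous_map ?Z ?R g"
    unfolding continuous_map_in_subtopology
  proof
    show "continuous_map ?Z (powertop_real V) g"
      unfolding continuous_map_componentwise
    proof
      show "g ` topspace ?Z \<subseteq> extensional V" unfolding g_def by auto
      show "\<forall>u\<in>V. continuous_map ?Z euclideanreal (\<lambda>z. g z u)"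
      proof
        fix u assume uV: "u \<in> V"
        have eq: "(\<lambda>z. g z u) = (\<lambda>z. (1 - fst z) * phi (snd z) u + fst z * snd z u)"
          using uV by (simp add: g_def fun_eq_iff)
        have f: "continuous_map ?Z euclideanreal fst"
          using continuous_map_fst[of "top_of_set {0..1::real}" ?R]
          by (rule continuous_map_into_fulltopology)
        have p: "continuous_map ?Z euclideanreal (\<lambda>z. phi (snd z) u)"
          using continuous_map_compose[OF continuous_map_snd cont_phi_coord[OF uV]] by (simp add: comp_def)
        have q: "continuous_map ?Z euclideanreal (\<lambda>z. snd z u)"
          using continuous_map_compose[OF continuous_map_snd cont_proj[OF uV]] by (simp add: comp_def)
        show "continuous_map ?Z euclideanreal (\<lambda>z. g z u)"
          unfolding eq
          by (rule continuous_map_add[OF continuous_map_real_mult[OF continuous_map_diff[OF continuous_map_canonical_const f] p] continuous_map_real_mult[OF f q]])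
      qed
    qed
    show "g \<in> topspace ?Z \<rightarrow> rset V NG" using gin by blast
  qed
  have hg: "h z = g z" if "z \<in> topspace ?Z" for z
  proof (cases "fst z = 1")
    case True
    obtain t x where zz: "z = (t,x)" by (cases z)
    have x: "x \<in> rset V NG" using that zz top_real by auto
    then have "x \<in> extensional V" by (simp add: rset_def)
    then have "g z = x" using True zz by (auto simp: g_def restrict_def extensional_def fun_eq_iff)
    then show ?thesis using True zz by (simp add: h_def)
  qed (simp add: h_def)
  have conth: "continuous_map ?Z ?R h"
    using contg hg by (rule_tac continuous_map_eq) auto
  show ?thesis
    unfolding homotopic_with_def real_eq[OF cverts_NG]
  proof (intro exI conjI allI ballI)
    show "continuous_map ?Z ?R h" by (rule conth)
    fix x
    show "h (0, x) = (id \<circ> phi) x"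
      using phi_ext[of x] by (auto simp: h_def g_def restrict_def extensional_def fun_eq_iff)
    show "h (1, x) = id x" by (simp add: h_def)
  qed simp
qed

lemma homot2: "homotopic_with (\<lambda>x. True) (realization XK) (realization XK) (phi \<circ> id) id"
proof (rule homotopic_with_equal)
  show "continuous_map (realization XK) (realization XK) (phi \<circ> id)"
    by (rule continuous_map_compose[OF cont_incl cont_phi])
  fix x assume "x \<in> topspace (realization XK)"
  then have "x \<in> rset V XK" unfolding real_eq[OF cverts_XK] top_real .
  then show "(phi \<circ> id) x = id x" using phi_id by simp
qed auto

lemma part2:
  "\<exists>X. complex_cluster X k (\<lambda>i. nbhd_complex (Vs i) (induced_edges E (Vs i))) \<and>
       shape (cverts X) k (\<lambda>i. cverts (nbhd_complex (Vs i) (induced_edges E (Vs i)))) = shape V k Vs \<and>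
       realization (nbhd_complex V E) homotopy_equivalent_space realization X"
proof (intro exI conjI)
  let ?K = "\<lambda>i. nbhd_complex (Vs i) (induced_edges E (Vs i))"
  have sc: "\<forall>i<k. simplicial_complex (?K i)" using Vs_sub finV by (auto intro!: sc_nbhd intro: finite_subset)
  have cv: "\<forall>i<k. cverts (?K i) = Vs i" by (simp add: cverts_nbhd)
  have sg: "\<forall>i<k. \<forall>s\<in>Vs i. {s} \<in> ?K i" by (auto intro: single_nbhd)
  note cg = cluster_gen[OF sc cv sg]
  show "complex_cluster (\<Union>i<k. ?K i) k ?K" using cg by blast
  show "shape (cverts (\<Union>i<k. ?K i)) k (\<lambda>i. cverts (?K i)) = shape V k Vs" using cg by blast
  show "realization (nbhd_complex V E) homotopy_equivalent_space realization (\<Union>i<k. ?K i)"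
    unfolding homotopy_equivalent_space_def
    using cont_phi cont_incl homot1 homot2 by blast
qed

end

theorem proposition4p1:
  fixes V :: "'a set" and E :: "'a set set" and k :: nat and Vs :: "nat \<Rightarrow> 'a set"
  assumes "simple_graph V E"
    and "graph_cluster V E k Vs"
  shows "(cluster_girth k Vs \<ge> 4 \<longrightarrow>
           (\<exists>X. complex_cluster X k (\<lambda>i. clique_complex (Vs i) (induced_edges E (Vs i))) \<and>
                shape (cverts X) k (\<lambda>i. cverts (clique_complex (Vs i) (induced_edges E (Vs i))))
                  = shape V k Vs \<and>
                complex_iso (clique_complex V E) X)) \<and>
         (cluster_girth k Vs \<ge> 5 \<longrightarrow>
           (\<exists>X. complex_cluster X k (\<lambda>i. nbhd_complex (Vs i) (induced_edges E (Vs i))) \<and>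
                shape (cverts X) k (\<lambda>i. cverts (nbhd_complex (Vs i) (induced_edges E (Vs i))))
                  = shape V k Vs \<and>
                realization (nbhd_complex V E) homotopy_equivalent_space realization X))"
proof (intro conjI impI)
  assume g: "cluster_girth k Vs \<ge> 4"
  have no3: "\<not> has_cluster_cycle k Vs 3" using girth_no[of 4 k Vs 3] g by (simp add: four_enat)
  interpret c4: clus4 V E k Vs using assms no3 by unfold_locales auto
  show "\<exists>X. complex_cluster X k (\<lambda>i. clique_complex (Vs i) (induced_edges E (Vs i))) \<and>
                shape (cverts X) k (\<lambda>i. cverts (clique_complex (Vs i) (induced_edges E (Vs i))))
                  = shape V k Vs \<and>
                complex_iso (clique_complex V E) X" by (rule c4.part1)
next
  assume g: "cluster_girth k Vs \<ge> 5"
  have no3: "\<not> has_cluster_cycle k Vs 3" using girth_no[of 5 k Vs 3] g by (simp add: five_enat)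
  have no4: "\<not> has_cluster_cycle k Vs 4" using girth_no[of 5 k Vs 4] g by (simp add: five_enat)
  interpret c5: clus5 V E k Vs using assms no3 no4 by unfold_locales auto
  show "\<exists>X. complex_cluster X k (\<lambda>i. nbhd_complex (Vs i) (induced_edges E (Vs i))) \<and>
                shape (cverts X) k (\<lambda>i. cverts (nbhd_complex (Vs i) (induced_edges E (Vs i))))
                  = shape V k Vs \<and>
                realization (nbhd_complex V E) homotopy_equivalent_space realization X" by (rule c5.part2)
qed

end
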